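(* Consider a matched pair study ($n_i=2$). Suppose the bounded null $\overline H_0$ holds, $\Gamma^\star_{(k)}\le\Gamma_0$ for some $1\le k\le I$ and $\Gamma_0\in[1,\infty]$, and the statistic $t(\cdot,\cdot)$ is effect increasing or differential increasing. Then $\overline p_{\Gamma_0;k}$, computed with $q_{ij}=q_{ij}(Y)$ (i.e. pretending Fisher's sharp null holds so that $Y(0)=Y$) and $T=t(Z,Y)$, is still a valid $p$-value: $\mathbb P(\overline p_{\Gamma_0;k}\le\alpha)\le\alpha$ for all $\alpha\in(0,1)$.
   Context: Setting: $I$ matched pairs; potential outcomes fixed; $Z\in\mathcal Z=\{z\in\{0,1\}^{2I}:z_{i1}+z_{i2}=1\ \forall i\}$ random with true mechanism $\mathbb P(Z=z)=\prod_i\prod_j(p^\star_{ij})^{z_{ij}}$, $p^\star_{i1}+p^\star_{i2}=1$; $\Gamma^\star_i=\max_jp^\star_{ij}/\min_kp^\star_{ik}\in[1,\infty]$, $\Gamma^\star_{(k)}$ its $k$th smallest. Observed $Y=Z\circ Y(1)+(1-Z)\circ Y(0)$ ($\circ$ = elementwise product). Bounded null $\overline H_0$: $Y_{ij}(1)\le Y_{ij}(0)$ for all $i,j$. The statistic has the form $t(z,y)=\sum_i\sum_jz_{ij}q_{ij}(y)$ for functions $q_{ij}:\mathbb R^{2I}\to\mathbb R$. Effect increasing: $t(z,y+z\circ\eta+(1-z)\circ\xi)\ge t(z,y)$ for all $z\in\mathcal Z$, $y,\eta,\xi$ with $\eta\succcurlyeq0\succcurlyeq\xi$. Differential increasing: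 $t(z,y+a\circ\eta)-t(z,y)\le t(a,y+a\circ\eta)-t(a,y)$ for all $z,a\in\mathcal Z$, $y$, and $\eta\succcurlyeq0$. With $q_{ij}=q_{ij}(Y)$: $\mathcal I_k$ is a set of $k$ pairs with smallest $|q_{i1}-q_{i2}|$; $\overline T(\Gamma_0;k)$ is a sum of independent variables equal, for $i\in\mathcal I_k$, to $\max\{q_{i1},q_{i2}\}$ w.p. $\Gamma_0/(1+\Gamma_0)$ (w.p. 1 if $\Gamma_0=\infty$) and $\min\{q_{i1},q_{i2}\}$ otherwise, and for $i\notin\mathcal I_k$ to $\max\{q_{i1},q_{i2}\}$ w.p. 1; $\overline p_{\Gamma_0;k}=\mathbb P(\overline T(\Gamma_0;k)\ge c)|_{c=T}$ with $q_{ij}$ held fixed. *)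

theory Defs
  imports "HOL-Probability.Probability" "HOL-Library.Multiset"
begin

(* Units are indexed by (i, j) with i :: 'i a pair (finite type, I = CARD('i))
   and j :: bool the unit within the pair (True ~ j=1, False ~ j=2). *)

definition Zset :: "('i \<times> bool \<Rightarrow> real) set" where
  "Zset = {z. \<forall>i. (z (i,True) = 0 \<or> z (i,True) = 1) \<and> (z (i,False) = 0 \<or> z (i,False) = 1)
               \<and> z (i,True) + z (i,False) = 1}"

definition Z_of :: "('i \<Rightarrow> bool) \<Rightarrow> ('i \<times> bool \<Rightarrow> real)" where
  "Z_of b = (\<lambda>(i,j). if j = b i then 1 else 0)"

(* true assignment mechanism: independent across pairs, P(Z=z) = prod_i prod_j p_ij^z_ij *)
definition Z_pmf :: "('i::finite \<times> bool \<Rightarrow> real) \<Rightarrow> ('i \<times> bool \<Rightarrow> real) pmf" where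
  "Z_pmf p = map_pmf Z_of (Pi_pmf UNIV False (\<lambda>i. bernoulli_pmf (p (i,True))))"

definition observed :: "('i \<times> bool \<Rightarrow> real) \<Rightarrow> ('i \<times> bool \<Rightarrow> real) \<Rightarrow> ('i \<times> bool \<Rightarrow> real) \<Rightarrow> ('i \<times> bool \<Rightarrow> real)" where
  "observed Y1 Y0 z = (\<lambda>u. z u * Y1 u + (1 - z u) * Y0 u)"

definition tstat :: "('i::finite \<times> bool \<Rightarrow> ('i \<times> bool \<Rightarrow> real) \<Rightarrow> real)
                     \<Rightarrow> ('i \<times> bool \<Rightarrow> real) \<Rightarrow> ('i \<times> bool \<Rightarrow> real) \<Rightarrow> real" where
  "tstat q z y = (\<Sum>u\<in>UNIV. z u * q u y)"

definition effect_increasing :: "('i::finite \<times> bool \<Rightarrow> ('i \<times> bool \<Rightarrow> real) \<Rightarrow> real) \<Rightarrow> bool" where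
  "effect_increasing q \<longleftrightarrow>
     (\<forall>z\<in>Zset. \<forall>y \<eta> \<xi>. (\<forall>u. \<eta> u \<ge> 0) \<and> (\<forall>u. \<xi> u \<le> 0) \<longrightarrow>
        tstat q z (\<lambda>u. y u + z u * \<eta> u + (1 - z u) * \<xi> u) \<ge> tstat q z y)"

definition differential_increasing :: "('i::finite \<times> bool \<Rightarrow> ('i \<times> bool \<Rightarrow> real) \<Rightarrow> real) \<Rightarrow> bool" where
  "differential_increasing q \<longleftrightarrow>
     (\<forall>z\<in>Zset. \<forall>a\<in>Zset. \<forall>y \<eta>. (\<forall>u. \<eta> u \<ge> 0) \<longrightarrow>
        tstat q z (\<lambda>u. y u + a u * \<eta> u) - tstat q z y
          \<le> tstat q a (\<lambda>u. y u + a u * \<eta> u) - tstat q a y)"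

definition Gamma :: "('i \<times> bool \<Rightarrow> real) \<Rightarrow> 'i \<Rightarrow> ereal" where
  "Gamma p i = (let mx = max (p (i,True)) (p (i,False)); mn = min (p (i,True)) (p (i,False))
                in if mn = 0 then \<infinity> else ereal (mx / mn))"

definition kth_smallest :: "nat \<Rightarrow> ('i::finite \<Rightarrow> ereal) \<Rightarrow> ereal" where
  "kth_smallest k f = sorted_list_of_multiset (image_mset f (mset_set UNIV)) ! (k - 1)"

definition is_smallest_set ::
  "('i::finite \<times> bool \<Rightarrow> ('i \<times> bool \<Rightarrow> real) \<Rightarrow> real) \<Rightarrow> nat \<Rightarrow> ('i \<times> bool \<Rightarrow> real) \<Rightarrow> 'i set \<Rightarrow> bool" where
  "is_smallest_set q k y K \<longleftrightarrow> card K = k \<and>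
     (\<forall>i\<in>K. \<forall>i'. i' \<notin> K \<longrightarrow> \<bar>q (i,True) y - q (i,False) y\<bar> \<le> \<bar>q (i',True) y - q (i',False) y\<bar>)"

definition pi_of :: "ereal \<Rightarrow> real" where
  "pi_of G0 = (if G0 = \<infinity> then 1 else real_of_ereal G0 / (1 + real_of_ereal G0))"

definition Tbar :: "('i::finite \<times> bool \<Rightarrow> ('i \<times> bool \<Rightarrow> real) \<Rightarrow> real) \<Rightarrow> 'i set \<Rightarrow> ('i \<times> bool \<Rightarrow> real)
                    \<Rightarrow> ('i \<Rightarrow> bool) \<Rightarrow> real" where
  "Tbar q K y b = (\<Sum>i\<in>UNIV. if i \<in> K \<and> \<not> b i then min (q (i,True) y) (q (i,False) y)
                                else max (q (i,True) y) (q (i,False) y))"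

definition pbar :: "('i::finite \<times> bool \<Rightarrow> ('i \<times> bool \<Rightarrow> real) \<Rightarrow> real) \<Rightarrow> ereal \<Rightarrow> 'i set
                    \<Rightarrow> ('i \<times> bool \<Rightarrow> real) \<Rightarrow> real \<Rightarrow> real" where
  "pbar q G0 K y c = measure_pmf.prob (Pi_pmf K True (\<lambda>_. bernoulli_pmf (pi_of G0)))
                        {b. Tbar q K y b \<ge> c}"

end

theory Submission
  imports Defs
begin


lemma prob_mono_supp:
  assumes "A \<inter> set_pmf P \<subseteq> B"
  shows "measure_pmf.prob P A \<le> measure_pmf.prob P B"
proof -
  have "measure_pmf.prob P A = measure_pmf.prob P (A \<inter> set_pmf P)"
    by (simp add: measure_Int_set_pmf)
  also have "\<dots> \<le> measure_pmf.prob P B"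
    using assms by (intro measure_pmf.finite_measure_mono) auto
  finally show ?thesis .
qed

lemma valid_pvalue:
  fixes g :: "'a \<Rightarrow> real"
  assumes fin: "finite (set_pmf P)" and a: "0 \<le> \<alpha>"
  shows "measure_pmf.prob P {z. measure_pmf.prob P {w. g z \<le> g w} \<le> \<alpha>} \<le> \<alpha>"
proof -
  define S where "S = {z. measure_pmf.prob P {w. g z \<le> g w} \<le> \<alpha>} \<inter> set_pmf P"
  show ?thesis
  proof (cases "S = {}")
    case True
    have "measure_pmf.prob P {z. measure_pmf.prob P {w. g z \<le> g w} \<le> \<alpha>} \<le> measure_pmf.prob P {}"
      by (rule prob_mono_supp) (use True S_def in auto)
    then show ?thesis using a by simp
  next
    case False
    have finS: "finite S" using fin S_def by auto
    obtain z0 where z0: "z0 \<in> S" "\<And>z. z \<in> S \<Longrightarrow> g z0 \<le> g z"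
      using ex_min_if_finite[of "g ` S"] finS False
      by (metis (no_types, lifting) arg_min_if_finite(1) arg_min_least)
    have "measure_pmf.prob P {z. measure_pmf.prob P {w. g z \<le> g w} \<le> \<alpha>} \<le> measure_pmf.prob P {w. g z0 \<le> g w}"
      by (rule prob_mono_supp) (use z0 S_def in auto)
    also have "\<dots> \<le> \<alpha>" using z0(1) S_def by auto
    finally show ?thesis .
  qed
qed

lemma coupling:
  fixes P :: "'a::finite \<Rightarrow> 'b pmf" and Kr :: "'a \<Rightarrow> 'b \<Rightarrow> 'c pmf"
  assumes R: "\<And>i v x. x \<in> set_pmf (Kr i v) \<Longrightarrow> R i x v"
    and EF: "\<And>x v. (\<forall>i. R i (x i) (v i)) \<Longrightarrow> x \<in> E \<Longrightarrow> v \<in> F"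
  shows "measure_pmf.prob (Pi_pmf UNIV d (\<lambda>i. bind_pmf (P i) (Kr i))) E
           \<le> measure_pmf.prob (Pi_pmf UNIV d' P) F"
proof -
  define Y where "Y = Pi_pmf UNIV d' P"
  define X where "X = (\<lambda>v. Pi_pmf UNIV d (\<lambda>i. Kr i (v i)))"
  define J where "J = bind_pmf Y (\<lambda>v. map_pmf (\<lambda>x. (x, v)) (X v))"
  have eqX: "Pi_pmf UNIV d (\<lambda>i. bind_pmf (P i) (Kr i)) = bind_pmf Y X"
    unfolding Y_def X_def by (rule Pi_pmf_bind) simp
  have fstJ: "map_pmf fst J = bind_pmf Y X"
    unfolding J_def by (simp add: map_bind_pmf map_pmf_comp o_def)
  have sndJ: "map_pmf snd J = Y"
    unfolding J_def by (simp add: map_bind_pmf map_pmf_comp o_def map_pmf_const bind_return_pmf')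
  have "measure_pmf.prob (bind_pmf Y X) E = measure_pmf.prob J (fst -` E)"
    by (simp flip: fstJ add: measure_map_pmf)
  also have "\<dots> \<le> measure_pmf.prob J (snd -` F)"
  proof (rule prob_mono_supp, rule subsetI)
    fix xv assume H: "xv \<in> fst -` E \<inter> set_pmf J"
    obtain x v where xv: "xv = (x, v)" by (cases xv)
    have xE: "x \<in> E" and xJ: "(x, v) \<in> set_pmf J" using H xv by auto
    then have "x \<in> set_pmf (X v)" unfolding J_def by auto
    then have "\<forall>i. x i \<in> set_pmf (Kr i (v i))" unfolding X_def
      by (auto simp: set_Pi_pmf PiE_dflt_def)
    then have "\<forall>i. R i (x i) (v i)" using R by blast
    then have "v \<in> F" using EF xE by auto
    then show "xv \<in> snd -` F" using xv by simp
  qed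
  also have "\<dots> = measure_pmf.prob Y F"
    by (simp flip: sndJ add: measure_map_pmf)
  finally show ?thesis unfolding eqX Y_def .
qed

lemma bern_bind:
  assumes "0 \<le> s" "s \<le> 1" "0 \<le> t" "t \<le> 1"
  shows "bind_pmf (bernoulli_pmf s) (\<lambda>y. if y then bernoulli_pmf t else return_pmf v)
       = bernoulli_pmf (s * t + (1 - s) * (if v then 1 else 0))"
proof (rule pmf_eqI)
  fix b :: bool
  have le: "s * t + (1 - s) * (if v then 1 else 0) \<le> 1"
  proof -
    have "s * t \<le> s" using assms by (simp add: mult_left_le)
    then show ?thesis using assms by (auto simp: algebra_simps)
  qed
  have ge: "0 \<le> s * t + (1 - s) * (if v then 1 else 0)" using assms by auto
  show "pmf (bind_pmf (bernoulli_pmf s) (\<lambda>y. if y then bernoulli_pmf t else return_pmf v)) b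
       = pmf (bernoulli_pmf (s * t + (1 - s) * (if v then 1 else 0))) b"
    using assms le ge by (cases b; cases v) (auto simp: pmf_bind algebra_simps)
qed

lemma bern_one: "bernoulli_pmf 1 = return_pmf True"
  by (rule pmf_eqI) (case_tac i; simp)

lemma Pi_pmf_UNIV_dflt: "Pi_pmf (UNIV::'a::finite set) d f = Pi_pmf UNIV d' f"
  by (rule pmf_eqI) (simp add: pmf_Pi)




lemma kth_count:
  fixes f :: "'i::finite \<Rightarrow> ereal"
  assumes "1 \<le> k" "k \<le> CARD('i)" "kth_smallest k f \<le> G"
  shows "k \<le> card {i. f i \<le> G}"
proof -
  define M where "M = image_mset f (mset_set (UNIV::'i set))"
  define xs where "xs = sorted_list_of_multiset M"
  have mxs: "mset xs = M" unfolding xs_def by simp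
  have srt: "sorted xs" unfolding xs_def by simp
  have len: "length xs = CARD('i)"
    using arg_cong[OF mxs, of size] by (simp add: M_def size_mset_set)
  have kth: "xs ! (k - 1) \<le> G" using assms(3) unfolding kth_smallest_def xs_def M_def by simp
  have "\<forall>x\<in>set (take k xs). x \<le> G"
  proof
    fix x assume "x \<in> set (take k xs)"
    then obtain j where j: "j < length (take k xs)" "x = take k xs ! j" by (metis in_set_conv_nth)
    then have "j \<le> k - 1" "k - 1 < length xs" using assms len by auto
    then have "xs ! j \<le> xs ! (k - 1)" using srt by (simp add: sorted_nth_mono)
    then show "x \<le> G" using j kth by auto
  qed
  then have "filter (\<lambda>x. x \<le> G) (take k xs) = take k xs" by simp
  then have "k = length (filter (\<lambda>x. x \<le> G) (take k xs))" using assms len by simp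
  also have "\<dots> \<le> length (filter (\<lambda>x. x \<le> G) xs)"
  proof -
    have "filter (\<lambda>x. x \<le> G) xs = filter (\<lambda>x. x \<le> G) (take k xs) @ filter (\<lambda>x. x \<le> G) (drop k xs)"
      by (metis append_take_drop_id filter_append)
    then show ?thesis by simp
  qed
  also have "\<dots> = size (filter_mset (\<lambda>x. x \<le> G) M)"
    by (metis mxs mset_filter size_mset)
  also have "\<dots> = card {i. f i \<le> G}"
    unfolding M_def filter_mset_image_mset by (simp add: filter_mset_mset_set size_mset_set)
  finally show ?thesis .
qed

lemma tau_exists:
  assumes "finite K" "finite S" "card K = card S"
  obtains \<tau> where "bij_betw \<tau> K S" "\<And>x. x \<notin> K \<Longrightarrow> \<tau> x \<notin> S" "\<And>x. x \<in> K \<Longrightarrow> \<tau> x = x \<or> \<tau> x \<notin> K"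
proof -
  have "card (K - S) = card (S - K)"
  proof -
    have "card (K - S) = card K - card (K \<inter> S)" using assms by (simp add: card_Diff_subset_Int)
    moreover have "card (S - K) = card S - card (S \<inter> K)" using assms by (simp add: card_Diff_subset_Int)
    ultimately show ?thesis using assms by (simp add: Int_commute)
  qed
  then have "\<exists>h. bij_betw h (K - S) (S - K)"
    by (intro finite_same_card_bij) (use assms in auto)
  then obtain h where h: "bij_betw h (K - S) (S - K)" by blast
  define \<tau> where "\<tau> x = (if x \<in> K - S then h x else if x \<in> S - K then inv_into (K - S) h x else x)" for x
  have "bij_betw \<tau> (K - S) (S - K) = bij_betw h (K - S) (S - K)"
    by (rule bij_betw_cong) (simp add: \<tau>_def)
  with h have b1: "bij_betw \<tau> (K - S) (S - K)" by simp
  have "bij_betw \<tau> (K \<inter> S) (K \<inter> S) = bij_betw id (K \<inter> S) (K \<inter> S)"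
    by (rule bij_betw_cong) (simp add: \<tau>_def)
  then have b2: "bij_betw \<tau> (K \<inter> S) (K \<inter> S)" by simp
  have "bij_betw \<tau> ((K \<inter> S) \<union> (K - S)) ((K \<inter> S) \<union> (S - K))"
    by (rule bij_betw_combine[OF b2 b1]) blast
  moreover have "(K \<inter> S) \<union> (K - S) = K" "(K \<inter> S) \<union> (S - K) = S" by blast+
  ultimately have c1: "bij_betw \<tau> K S" by simp
  have c2: "\<tau> x \<notin> S" if "x \<notin> K" for x
  proof (cases "x \<in> S - K")
    case True
    then have "x \<in> h ` (K - S)" using h by (simp add: bij_betw_def)
    then have "inv_into (K - S) h x \<in> K - S" by (rule inv_into_into)
    then show ?thesis using True that by (simp add: \<tau>_def)
  next
    case False then show ?thesis using that by (simp add: \<tau>_def)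
  qed
  have c3: "\<tau> x = x \<or> \<tau> x \<notin> K" if "x \<in> K" for x
  proof (cases "x \<in> S")
    case True then show ?thesis using that by (simp add: \<tau>_def)
  next
    case False
    then have "h x \<in> S - K" using that h by (auto simp: bij_betw_def)
    then show ?thesis using False that by (simp add: \<tau>_def)
  qed
  show ?thesis using that c1 c2 c3 by blast
qed

lemma Z_of_Zset: "Z_of b \<in> Zset"
  by (auto simp: Z_of_def Zset_def)

lemma set_Z_pmf: "set_pmf (Z_pmf p) \<subseteq> Zset"
  by (auto simp: Z_pmf_def Z_of_Zset)

lemma finite_set_Z_pmf: "finite (set_pmf (Z_pmf (p :: 'i::finite \<times> bool \<Rightarrow> real)))"
proof -
  have "set_pmf (Z_pmf p) \<subseteq> Z_of ` UNIV" by (auto simp: Z_pmf_def)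
  then show ?thesis by (rule finite_subset) simp
qed

lemma tstat_Z_of:
  "tstat q (Z_of b) y = (\<Sum>i\<in>UNIV. if b i then q (i,True) y else q (i,False) y)"
proof -
  have "tstat q (Z_of b) y = (\<Sum>(i,j)\<in>UNIV \<times> UNIV. Z_of b (i,j) * q (i,j) y)"
    unfolding tstat_def by (simp add: UNIV_Times_UNIV)
  also have "\<dots> = (\<Sum>i\<in>UNIV. \<Sum>j\<in>UNIV. Z_of b (i,j) * q (i,j) y)"
    by (rule sum.cartesian_product[symmetric])
  also have "\<dots> = (\<Sum>i\<in>UNIV. if b i then q (i,True) y else q (i,False) y)"
    by (rule sum.cong) (auto simp: UNIV_bool Z_of_def)
  finally show ?thesis .
qed




lemma pi_bounds: "1 \<le> G0 \<Longrightarrow> 1/2 \<le> pi_of G0 \<and> pi_of G0 \<le> 1"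
  by (cases G0) (auto simp: pi_of_def field_simps)

lemma max_le_pi:
  assumes "p (i,True) \<ge> 0" "p (i,False) \<ge> 0" "p (i,True) + p (i,False) = 1"
    and "Gamma p i \<le> G0" "1 \<le> G0"
  shows "max (p (i,True)) (p (i,False)) \<le> pi_of G0"
proof (cases G0)
  case PInf then show ?thesis using assms by (auto simp: pi_of_def)
next
  case MInf then show ?thesis using assms by auto
next
  case (real g)
  define mx where "mx = max (p (i,True)) (p (i,False))"
  define mn where "mn = min (p (i,True)) (p (i,False))"
  have mnmx: "mn = 1 - mx" using assms unfolding mx_def mn_def by auto
  have mn0: "mn \<noteq> 0"
  proof
    assume "mn = 0"
    then have "Gamma p i = \<infinity>" unfolding Gamma_def mn_def by (simp add: Let_def)
    then show False using assms real by simp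
  qed
  have "mx / mn \<le> g" using assms real mn0 unfolding Gamma_def mx_def[symmetric] mn_def[symmetric]
    by (simp add: Let_def mx_def mn_def)
  moreover have "mn > 0" using mn0 assms unfolding mn_def by auto
  ultimately have "mx \<le> g * (1 - mx)" using mnmx by (simp add: divide_le_eq)
  then have "mx * (1 + g) \<le> g" by (simp add: algebra_simps)
  moreover have "1 + g > 0" using assms real by simp
  ultimately have "mx \<le> g / (1 + g)" by (simp add: le_divide_eq)
  then show ?thesis using real unfolding pi_of_def mx_def by simp
qed

lemma sum_if_split:
  fixes mn mx :: "'i::finite \<Rightarrow> real"
  shows "(\<Sum>i\<in>UNIV. if i \<in> A \<and> P i then mn i else mx i)
         = (\<Sum>i\<in>UNIV. mx i) - (\<Sum>i\<in>A. if P i then mx i - mn i else 0)"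
proof -
  have "(\<Sum>i\<in>UNIV. if i \<in> A \<and> P i then mn i else mx i)
        = (\<Sum>i\<in>UNIV. mx i - (if i \<in> A then (if P i then mx i - mn i else 0) else 0))"
    by (rule sum.cong) auto
  also have "\<dots> = (\<Sum>i\<in>UNIV. mx i) - (\<Sum>i\<in>UNIV. if i \<in> A then (if P i then mx i - mn i else 0) else 0)"
    by (rule sum_subtractf)
  also have "(\<Sum>i\<in>UNIV. if i \<in> A then (if P i then mx i - mn i else 0) else 0)
       = (\<Sum>i\<in>A. if P i then mx i - mn i else 0)"
    by (simp add: sum.inter_restrict[symmetric])
  finally show ?thesis .
qed

lemma sens_bound:
  fixes p :: "'i::finite \<times> bool \<Rightarrow> real"
  assumes p_nonneg: "\<forall>u. p u \<ge> 0" and p_sum: "\<forall>i. p (i,True) + p (i,False) = 1"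
    and G0_ge: "1 \<le> G0" and KS: "is_smallest_set q k y K"
    and Ssub: "\<forall>i\<in>S. Gamma p i \<le> G0" and cardS: "card S = k"
  shows "measure_pmf.prob (Z_pmf p) {w. c \<le> tstat q w y} \<le> pbar q G0 K y c"
proof -
  define a where "a i = q (i,True) y" for i
  define f where "f i = q (i,False) y" for i
  define mx where "mx i = max (a i) (f i)" for i
  define mn where "mn i = min (a i) (f i)" for i
  define \<pi> where "\<pi> = pi_of G0"
  define s where "s i = (if i \<in> S then \<pi> else 1)" for i
  define ori where "ori i = (f i \<le> a i)" for i
  define t where "t i = (if ori i then p (i,True) / s i else 1 - p (i,False) / s i)" for i
  have \<pi>b: "1/2 \<le> \<pi>" "\<pi> \<le> 1" using pi_bounds[OF G0_ge] \<pi>_def by auto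
  have sb: "0 < s i" "s i \<le> 1" for i using \<pi>b s_def by auto
  have pTs: "p (i,True) \<le> s i" and pFs: "p (i,False) \<le> s i" for i
  proof -
    have "max (p (i,True)) (p (i,False)) \<le> s i"
    proof (cases "i \<in> S")
      case True then show ?thesis using max_le_pi[of p i G0] assms \<pi>_def s_def by auto
    next
      case False
      have "0 \<le> p (i,True)" "0 \<le> p (i,False)" using p_nonneg by auto
      then show ?thesis using p_sum[rule_format, of i] False s_def by auto
    qed
    then show "p (i,True) \<le> s i" "p (i,False) \<le> s i" by auto
  qed
  define Kr where "Kr i = (\<lambda>v. if v then bernoulli_pmf (t i) else return_pmf (\<not> ori i))" for i
  have bern_eq: "(\<lambda>i. bernoulli_pmf (p (i,True))) = (\<lambda>i. bind_pmf (bernoulli_pmf (s i)) (Kr i))"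
  proof (rule ext)
    fix i
    have tb: "0 \<le> t i" "t i \<le> 1"
      using sb[of i] pTs[of i] pFs[of i] p_nonneg t_def by (auto simp: field_simps)
    have "bind_pmf (bernoulli_pmf (s i)) (Kr i)
        = bernoulli_pmf (s i * t i + (1 - s i) * (if \<not> ori i then 1 else 0))"
      unfolding Kr_def using sb[of i] tb by (intro bern_bind) auto
    also have "s i * t i + (1 - s i) * (if \<not> ori i then 1 else 0) = p (i,True)"
    proof (cases "ori i")
      case True then show ?thesis using sb[of i] unfolding t_def by (simp add: field_simps)
    next
      case False
      have "s i * t i = s i - p (i,False)" using sb[of i] False unfolding t_def by (simp add: field_simps)
      then show ?thesis using False p_sum[rule_format, of i] by (simp add: algebra_simps)
    qed
    finally show "bernoulli_pmf (p (i,True)) = bind_pmf (bernoulli_pmf (s i)) (Kr i)" by simp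
  qed
  define E where "E = {b::'i \<Rightarrow> bool. c \<le> (\<Sum>i\<in>UNIV. if b i then a i else f i)}"
  define F where "F = {b::'i \<Rightarrow> bool. c \<le> (\<Sum>i\<in>UNIV. if i \<in> S \<and> \<not> b i then mn i else mx i)}"
  have "measure_pmf.prob (Z_pmf p) {w. c \<le> tstat q w y}
      = measure_pmf.prob (Pi_pmf UNIV False (\<lambda>i. bernoulli_pmf (p (i,True)))) E"
    unfolding Z_pmf_def measure_map_pmf E_def a_def f_def by (simp add: vimage_def tstat_Z_of)
  also have "\<dots> = measure_pmf.prob (Pi_pmf UNIV False (\<lambda>i. bind_pmf (bernoulli_pmf (s i)) (Kr i))) E"
    by (simp only: bern_eq)
  also have "\<dots> \<le> measure_pmf.prob (Pi_pmf UNIV True (\<lambda>i. bernoulli_pmf (s i))) F"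
  proof (rule coupling[where R = "\<lambda>i x v. \<not> v \<longrightarrow> x \<noteq> ori i"])
    fix i v x assume "x \<in> set_pmf (Kr i v)"
    then show "\<not> v \<longrightarrow> x \<noteq> ori i" by (auto simp: Kr_def)
  next
    fix x v assume R: "\<forall>i. \<not> v i \<longrightarrow> x i \<noteq> ori i" and xE: "x \<in> E"
    have "(\<Sum>i\<in>UNIV. if x i then a i else f i) \<le> (\<Sum>i\<in>UNIV. if i \<in> S \<and> \<not> v i then mn i else mx i)"
    proof (rule sum_mono)
      fix i
      show "(if x i then a i else f i) \<le> (if i \<in> S \<and> \<not> v i then mn i else mx i)"
        using R[rule_format, of i] by (auto simp: mn_def mx_def ori_def)
    qed
    then show "v \<in> F" using xE unfolding E_def F_def by simp
  qed
  also have "Pi_pmf UNIV True (\<lambda>i. bernoulli_pmf (s i)) = Pi_pmf S True (\<lambda>_. bernoulli_pmf \<pi>)"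
  proof -
    have "(\<lambda>i. bernoulli_pmf (s i)) = (\<lambda>i. if i \<in> S then bernoulli_pmf \<pi> else return_pmf True)"
      by (rule ext) (simp add: s_def bern_one)
    then have "Pi_pmf UNIV True (\<lambda>i. bernoulli_pmf (s i))
       = Pi_pmf UNIV True (\<lambda>i. if i \<in> S then bernoulli_pmf \<pi> else return_pmf True)" by simp
    also have "\<dots> = Pi_pmf {x\<in>UNIV. x \<in> S} True (\<lambda>_. bernoulli_pmf \<pi>)"
      by (rule Pi_pmf_if_set) simp
    finally show ?thesis by simp
  qed
  also have "measure_pmf.prob (Pi_pmf S True (\<lambda>_. bernoulli_pmf \<pi>)) F \<le> pbar q G0 K y c"
  proof -
    have cardK: "card K = card S" using KS cardS by (simp add: is_smallest_set_def)
    obtain \<tau> where tau: "bij_betw \<tau> K S" "\<And>x. x \<notin> K \<Longrightarrow> \<tau> x \<notin> S"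
      "\<And>x. x \<in> K \<Longrightarrow> \<tau> x = x \<or> \<tau> x \<notin> K"
      using tau_exists[of K S] cardK by auto
    have "pbar q G0 K y c = measure_pmf.prob (Pi_pmf K True (\<lambda>_. bernoulli_pmf \<pi>)) {b. c \<le> Tbar q K y b}"
      unfolding pbar_def \<pi>_def by simp
    also have "Pi_pmf K True (\<lambda>_. bernoulli_pmf \<pi>) = map_pmf (\<lambda>g. g \<circ> \<tau>) (Pi_pmf S True (\<lambda>_. bernoulli_pmf \<pi>))"
      by (rule Pi_pmf_bij_betw) (use tau in auto)
    also have "measure_pmf.prob \<dots> {b. c \<le> Tbar q K y b}
        = measure_pmf.prob (Pi_pmf S True (\<lambda>_. bernoulli_pmf \<pi>)) {g. c \<le> Tbar q K y (g \<circ> \<tau>)}"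
      by (simp add: measure_map_pmf vimage_def)
    finally have pb: "pbar q G0 K y c = \<dots>" .
    define D where "D i = mx i - mn i" for i
    have DK: "D i \<le> D (\<tau> i)" if "i \<in> K" for i
    proof -
      have "D i = \<bar>a i - f i\<bar>" "D (\<tau> i) = \<bar>a (\<tau> i) - f (\<tau> i)\<bar>"
        by (auto simp: D_def mx_def mn_def)
      moreover have "\<bar>a i - f i\<bar> \<le> \<bar>a (\<tau> i) - f (\<tau> i)\<bar>"
        using tau(3)[OF that] KS that unfolding is_smallest_set_def a_def f_def by auto
      ultimately show ?thesis by simp
    qed
    have "F \<subseteq> {g. c \<le> Tbar q K y (g \<circ> \<tau>)}"
    proof
      fix g assume "g \<in> F"
      then have c1: "c \<le> (\<Sum>i\<in>UNIV. if i \<in> S \<and> \<not> g i then mn i else mx i)" unfolding F_def by simp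
      have e1: "(\<Sum>i\<in>UNIV. if i \<in> S \<and> \<not> g i then mn i else mx i)
          = (\<Sum>i\<in>UNIV. mx i) - (\<Sum>i\<in>S. if \<not> g i then D i else 0)"
        unfolding D_def by (rule sum_if_split)
      have e2: "(\<Sum>i\<in>S. if \<not> g i then D i else 0) = (\<Sum>i\<in>K. if \<not> g (\<tau> i) then D (\<tau> i) else 0)"
        using sum.reindex_bij_betw[OF tau(1), of "\<lambda>i. if \<not> g i then D i else 0"] by simp
      have e3: "(\<Sum>i\<in>K. if \<not> g (\<tau> i) then D i else 0) \<le> (\<Sum>i\<in>K. if \<not> g (\<tau> i) then D (\<tau> i) else 0)"
        by (rule sum_mono) (use DK in auto)
      have e4: "(\<Sum>i\<in>UNIV. mx i) - (\<Sum>i\<in>K. if \<not> g (\<tau> i) then D i else 0)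
          = (\<Sum>i\<in>UNIV. if i \<in> K \<and> \<not> g (\<tau> i) then mn i else mx i)"
        unfolding D_def by (rule sum_if_split[symmetric])
      have e5: "(\<Sum>i\<in>UNIV. if i \<in> K \<and> \<not> g (\<tau> i) then mn i else mx i) = Tbar q K y (g \<circ> \<tau>)"
        unfolding Tbar_def mn_def mx_def a_def f_def by simp
      have "c \<le> Tbar q K y (g \<circ> \<tau>)" using c1 e1 e2 e3 e4 e5 by linarith
      then show "g \<in> {g. c \<le> Tbar q K y (g \<circ> \<tau>)}" by simp
    qed
    then have "measure_pmf.prob (Pi_pmf S True (\<lambda>_. bernoulli_pmf \<pi>)) F
       \<le> measure_pmf.prob (Pi_pmf S True (\<lambda>_. bernoulli_pmf \<pi>)) {g. c \<le> Tbar q K y (g \<circ> \<tau>)}"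
      by (intro measure_pmf.finite_measure_mono) auto
    then show ?thesis using pb by simp
  qed
  finally show ?thesis .
qed




lemma Zset_01: "z \<in> Zset \<Longrightarrow> z u = 0 \<or> z u = 1"
proof -
  assume z: "z \<in> Zset"
  obtain i j where u: "u = (i, j)" by (cases u)
  show ?thesis using z unfolding u Zset_def by (cases j) auto
qed

theorem theoremA2:
  fixes Y1 Y0 :: "'i::finite \<times> bool \<Rightarrow> real"
    and p :: "'i \<times> bool \<Rightarrow> real"
    and q :: "'i \<times> bool \<Rightarrow> ('i \<times> bool \<Rightarrow> real) \<Rightarrow> real"
    and k :: nat and G0 :: ereal
    and Ik :: "('i \<times> bool \<Rightarrow> real) \<Rightarrow> 'i set"
    and \<alpha> :: real
  assumes p_nonneg: "\<forall>u. p u \<ge> 0"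
    and p_sum: "\<forall>i. p (i,True) + p (i,False) = 1"
    and bounded_null: "\<forall>u. Y1 u \<le> Y0 u"
    and k_ge: "1 \<le> k" and k_le: "k \<le> CARD('i)"
    and G0_ge: "1 \<le> G0"
    and sens: "kth_smallest k (Gamma p) \<le> G0"
    and incr: "effect_increasing q \<or> differential_increasing q"
    and Ik: "\<forall>y. is_smallest_set q k y (Ik y)"
    and \<alpha>_pos: "0 < \<alpha>" and \<alpha>_lt: "\<alpha> < 1"
  shows "measure_pmf.prob (Z_pmf p)
           {z. pbar q G0 (Ik (observed Y1 Y0 z)) (observed Y1 Y0 z)
                 (tstat q z (observed Y1 Y0 z)) \<le> \<alpha>} \<le> \<alpha>"
proof -
  have "k \<le> card {i. Gamma p i \<le> G0}" using kth_count[OF k_ge k_le sens] .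
  then obtain S where S: "S \<subseteq> {i. Gamma p i \<le> G0}" "card S = k"
    by (meson obtain_subset_with_card_n)
  define yz where "yz z = observed Y1 Y0 z" for z
  have "\<exists>g::('i \<times> bool \<Rightarrow> real) \<Rightarrow> real. \<forall>w\<in>Zset. \<forall>z\<in>Zset. g z \<le> g w \<longrightarrow> tstat q z (yz z) \<le> tstat q w (yz z)"
    using incr
  proof
    assume ei: "effect_increasing q"
    show ?thesis
    proof (intro exI[of _ "\<lambda>w. tstat q w (yz w)"] ballI impI)
      fix w z assume w: "w \<in> Zset" and z: "z \<in> Zset" and le: "tstat q z (yz z) \<le> tstat q w (yz w)"
      define \<eta> where "\<eta> u = (1 - z u) * (Y0 u - Y1 u)" for u
      define \<xi> where "\<xi> u = - (z u * (Y0 u - Y1 u))" for u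
      have "\<eta> u \<ge> 0" for u using Zset_01[OF z, of u] bounded_null[rule_format, of u] unfolding \<eta>_def by auto
      moreover have "\<xi> u \<le> 0" for u using Zset_01[OF z, of u] bounded_null[rule_format, of u] unfolding \<xi>_def by auto
      ultimately have "tstat q w (\<lambda>u. yz w u + w u * \<eta> u + (1 - w u) * \<xi> u) \<ge> tstat q w (yz w)"
        using ei w unfolding effect_increasing_def by blast
      moreover have "(\<lambda>u. yz w u + w u * \<eta> u + (1 - w u) * \<xi> u) = yz z"
        by (rule ext) (simp add: yz_def observed_def \<eta>_def \<xi>_def algebra_simps)
      ultimately show "tstat q z (yz z) \<le> tstat q w (yz z)" using le by simp
    qed
  next
    assume di: "differential_increasing q"
    show ?thesis
    proof (intro exI[of _ "\<lambda>w. tstat q w Y0"] ballI impI)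
      fix w z assume w: "w \<in> Zset" and z: "z \<in> Zset" and le: "tstat q z Y0 \<le> tstat q w Y0"
      define \<eta> where "\<eta> u = Y0 u - Y1 u" for u
      have "\<eta> u \<ge> 0" for u using bounded_null[rule_format, of u] unfolding \<eta>_def by auto
      then have "tstat q w (\<lambda>u. yz z u + z u * \<eta> u) - tstat q w (yz z)
          \<le> tstat q z (\<lambda>u. yz z u + z u * \<eta> u) - tstat q z (yz z)"
        using di w z unfolding differential_increasing_def by blast
      moreover have "(\<lambda>u. yz z u + z u * \<eta> u) = Y0"
        by (rule ext) (simp add: yz_def observed_def \<eta>_def algebra_simps)
      ultimately show "tstat q z (yz z) \<le> tstat q w (yz z)" using le by simp
    qed
  qed
  then obtain g :: "('i \<times> bool \<Rightarrow> real) \<Rightarrow> real" where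
    g: "\<And>w z. w \<in> Zset \<Longrightarrow> z \<in> Zset \<Longrightarrow> g z \<le> g w \<Longrightarrow> tstat q z (yz z) \<le> tstat q w (yz z)"
    by blast
  have "measure_pmf.prob (Z_pmf p)
           {z. pbar q G0 (Ik (observed Y1 Y0 z)) (observed Y1 Y0 z) (tstat q z (observed Y1 Y0 z)) \<le> \<alpha>}
        \<le> measure_pmf.prob (Z_pmf p) {z. measure_pmf.prob (Z_pmf p) {w. g z \<le> g w} \<le> \<alpha>}"
  proof (rule prob_mono_supp, rule subsetI)
    fix z assume H: "z \<in> {z. pbar q G0 (Ik (observed Y1 Y0 z)) (observed Y1 Y0 z) (tstat q z (observed Y1 Y0 z)) \<le> \<alpha>} \<inter> set_pmf (Z_pmf p)"
    then have zZ: "z \<in> Zset" and pb: "pbar q G0 (Ik (yz z)) (yz z) (tstat q z (yz z)) \<le> \<alpha>"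
      using set_Z_pmf unfolding yz_def by auto
    have "measure_pmf.prob (Z_pmf p) {w. g z \<le> g w}
        \<le> measure_pmf.prob (Z_pmf p) {w. tstat q z (yz z) \<le> tstat q w (yz z)}"
      by (rule prob_mono_supp) (use g zZ set_Z_pmf in auto)
    also have "\<dots> \<le> pbar q G0 (Ik (yz z)) (yz z) (tstat q z (yz z))"
      by (rule sens_bound[OF p_nonneg p_sum G0_ge Ik[rule_format]]) (use S in auto)
    finally show "z \<in> {z. measure_pmf.prob (Z_pmf p) {w. g z \<le> g w} \<le> \<alpha>}" using pb by simp
  qed
  also have "\<dots> \<le> \<alpha>"
    by (rule valid_pvalue) (use finite_set_Z_pmf \<alpha>_pos in auto)
  finally show ?thesis .
qed


end
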